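(* Let $\mathcal{M}=(S,E,T)$ be a trivially parametric Markov chain satisfying the standing assumptions below, let $s\in S$ and let $A\subseteq S$ be a never-worse equivalence class. If $s$ almost-surely reaches $A$, then $s\in A$.
   Context: A trivially parametric Markov chain $\mathcal{M}=(S,E,T)$ consists of a finite set of states $S$, targets $T=\{\mathit{fin},\mathit{fail}\}$ with no outgoing edges, and edges $E\subseteq(S\setminus T)\times S$. A graph-preserving valuation assigns to each non-target $s$ a full-support probability distribution on its successor set $sE$; write $P_{\mathsf{val}}(s)$ for the probability of reaching $\mathit{fin}$ from $s$ in the resulting Markov chain. For $s,s'\in S$, $s\sim s'$ (never-worse equivalent) iff $P_{\mathsf{val}}(s)=P_{\mathsf{val}}(s')$ for every graph-preserving valuation; equivalence classes are the classes of $\sim$. $s$ almost-surely reaches $A$ if the probability of reaching $A$ from $s$ is $1$ for every graph-preserving valuation. Standing assumptions: the equivalence classes of $\mathit{fin}$ and $\mathit{fail}$ are $\{\mathit{fin}\}$ and $\{\mathit{fail}\}$; no state has a self-loop; every non-target state has at least two successors. *)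

theory Defs
  imports Complex_Main
begin

definition succs :: "('a \<times> 'a) set \<Rightarrow> 'a \<Rightarrow> 'a set" where
  "succs E s = {t. (s, t) \<in> E}"

text \<open>A graph-preserving valuation: every non-target state gets a full-support
probability distribution on its successor set (values outside E are irrelevant).\<close>
definition graph_preserving ::
  "'a set \<Rightarrow> ('a \<times> 'a) set \<Rightarrow> 'a set \<Rightarrow> ('a \<Rightarrow> 'a \<Rightarrow> real) \<Rightarrow> bool" where
  "graph_preserving S E T val \<longleftrightarrow>
     (\<forall>s \<in> S - T. (\<forall>t \<in> succs E s. 0 < val s t) \<and> (\<Sum>t \<in> succs E s. val s t) = 1)"

fun reach_within :: "('a \<times> 'a) set \<Rightarrow> ('a \<Rightarrow> 'a \<Rightarrow> real) \<Rightarrow> 'a set \<Rightarrow> nat \<Rightarrow> 'a \<Rightarrow> real" where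
  "reach_within E val A 0 s = (if s \<in> A then 1 else 0)"
| "reach_within E val A (Suc n) s =
     (if s \<in> A then 1 else (\<Sum>t \<in> succs E s. val s t * reach_within E val A n t))"

definition reach_prob :: "('a \<times> 'a) set \<Rightarrow> ('a \<Rightarrow> 'a \<Rightarrow> real) \<Rightarrow> 'a set \<Rightarrow> 'a \<Rightarrow> real" where
  "reach_prob E val A s = (SUP n. reach_within E val A n s)"

definition P_val :: "('a \<times> 'a) set \<Rightarrow> ('a \<Rightarrow> 'a \<Rightarrow> real) \<Rightarrow> 'a \<Rightarrow> 'a \<Rightarrow> real" where
  "P_val E val fin s = reach_prob E val {fin} s"

definition never_worse_equiv ::
  "'a set \<Rightarrow> ('a \<times> 'a) set \<Rightarrow> 'a \<Rightarrow> 'a \<Rightarrow> 'a \<Rightarrow> 'a \<Rightarrow> bool" where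
  "never_worse_equiv S E fin fail s s' \<longleftrightarrow>
     (\<forall>val. graph_preserving S E {fin, fail} val \<longrightarrow> P_val E val fin s = P_val E val fin s')"

definition equiv_class :: "'a set \<Rightarrow> ('a \<times> 'a) set \<Rightarrow> 'a \<Rightarrow> 'a \<Rightarrow> 'a \<Rightarrow> 'a set" where
  "equiv_class S E fin fail s = {s' \<in> S. never_worse_equiv S E fin fail s s'}"

definition is_equiv_class :: "'a set \<Rightarrow> ('a \<times> 'a) set \<Rightarrow> 'a \<Rightarrow> 'a \<Rightarrow> 'a set \<Rightarrow> bool" where
  "is_equiv_class S E fin fail A \<longleftrightarrow> (\<exists>s \<in> S. A = equiv_class S E fin fail s)"

definition almost_surely_reaches ::
  "'a set \<Rightarrow> ('a \<times> 'a) set \<Rightarrow> 'a \<Rightarrow> 'a \<Rightarrow> 'a \<Rightarrow> 'a set \<Rightarrow> bool" where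
  "almost_surely_reaches S E fin fail s A \<longleftrightarrow>
     (\<forall>val. graph_preserving S E {fin, fail} val \<longrightarrow> reach_prob E val A s = 1)"

definition tpmc :: "'a set \<Rightarrow> ('a \<times> 'a) set \<Rightarrow> 'a \<Rightarrow> 'a \<Rightarrow> bool" where
  "tpmc S E fin fail \<longleftrightarrow>
     finite S \<and> fin \<in> S \<and> fail \<in> S \<and> fin \<noteq> fail \<and>
     E \<subseteq> (S - {fin, fail}) \<times> S"

definition standing_assumptions :: "'a set \<Rightarrow> ('a \<times> 'a) set \<Rightarrow> 'a \<Rightarrow> 'a \<Rightarrow> bool" where
  "standing_assumptions S E fin fail \<longleftrightarrow>
     equiv_class S E fin fail fin = {fin} \<and>
     equiv_class S E fin fail fail = {fail} \<and>
     (\<forall>s \<in> S. (s, s) \<notin> E) \<and>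
     (\<forall>s \<in> S - {fin, fail}. 2 \<le> card (succs E s))"

end

theory Submission
  imports Defs
begin

lemma rw_bounds:
  assumes gp: "graph_preserving S E T val" and out: "\<And>x. x \<notin> S - T \<Longrightarrow> succs E x = {}"
    and fs: "\<And>x. finite (succs E x)"
  shows "0 \<le> reach_within E val B n x \<and> reach_within E val B n x \<le> 1"
proof (induction n arbitrary: x)
  case 0 show ?case by simp
next
  case (Suc n)
  show ?case
  proof (cases "x \<in> B")
    case True thus ?thesis by simp
  next
    case False
    show ?thesis
    proof (cases "x \<in> S - T")
      case True
      with gp have pos: "\<forall>t\<in>succs E x. 0 < val x t" and s1: "(\<Sum>t\<in>succs E x. val x t) = 1"
        unfolding graph_preserving_def by auto
      have "0 \<le> (\<Sum>t\<in>succs E x. val x t * reach_within E val B n t)"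
        using pos Suc.IH by (intro sum_nonneg) (simp add: less_imp_le)
      moreover have "(\<Sum>t\<in>succs E x. val x t * reach_within E val B n t) \<le> (\<Sum>t\<in>succs E x. val x t)"
        using pos Suc.IH by (intro sum_mono) (simp add: less_imp_le mult_left_le)
      ultimately show ?thesis using False s1 by simp
    next
      case F2: False
      then show ?thesis using out[OF F2] False by simp
    qed
  qed
qed

lemma rw_mono:
  assumes gp: "graph_preserving S E T val" and out: "\<And>x. x \<notin> S - T \<Longrightarrow> succs E x = {}"
    and fs: "\<And>x. finite (succs E x)"
  shows "reach_within E val B n x \<le> reach_within E val B (Suc n) x"
proof (induction n arbitrary: x)
  case 0
  show ?case
  proof (cases "x \<in> B")
    case False
    then show ?thesis using rw_bounds[OF gp out fs, of B "Suc 0" x] by simp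
  qed simp
next
  case (Suc n)
  show ?case
  proof (cases "x \<in> B")
    case True thus ?thesis by simp
  next
    case False
    show ?thesis
    proof (cases "x \<in> S - T")
      case True
      with gp have pos: "\<forall>t\<in>succs E x. 0 < val x t"
        unfolding graph_preserving_def by auto
      have "(\<Sum>t\<in>succs E x. val x t * reach_within E val B n t) \<le> (\<Sum>t\<in>succs E x. val x t * reach_within E val B (Suc n) t)"
        using pos Suc.IH by (intro sum_mono) (simp add: less_imp_le mult_left_mono)
      then show ?thesis using False by simp
    next
      case F2: False
      then show ?thesis using out[OF F2] False by simp
    qed
  qed
qed

lemma rw_lim:
  assumes gp: "graph_preserving S E T val" and out: "\<And>x. x \<notin> S - T \<Longrightarrow> succs E x = {}"
    and fs: "\<And>x. finite (succs E x)"
  shows "(\<lambda>n. reach_within E val B n x) \<longlonglongrightarrow> reach_prob E val B x"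
  unfolding reach_prob_def
proof (rule LIMSEQ_incseq_SUP)
  show "bdd_above (range (\<lambda>n. reach_within E val B n x))"
    using rw_bounds[OF gp out fs] by (intro bdd_aboveI[of _ 1]) blast
  show "incseq (\<lambda>n. reach_within E val B n x)"
    using rw_mono[OF gp out fs] by (intro incseq_SucI) blast
qed

lemma rp_bounds:
  assumes gp: "graph_preserving S E T val" and out: "\<And>x. x \<notin> S - T \<Longrightarrow> succs E x = {}"
    and fs: "\<And>x. finite (succs E x)"
  shows "0 \<le> reach_prob E val B x \<and> reach_prob E val B x \<le> 1"
proof -
  have l: "(\<lambda>n. reach_within E val B n x) \<longlonglongrightarrow> reach_prob E val B x" by (rule rw_lim[OF gp out fs])
  have "0 \<le> reach_prob E val B x"
    by (rule LIMSEQ_le_const[OF l]) (use rw_bounds[OF gp out fs] in blast)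
  moreover have "reach_prob E val B x \<le> 1"
    by (rule LIMSEQ_le_const2[OF l]) (use rw_bounds[OF gp out fs] in blast)
  ultimately show ?thesis by simp
qed

lemma rp_fix:
  assumes gp: "graph_preserving S E T val" and out: "\<And>x. x \<notin> S - T \<Longrightarrow> succs E x = {}"
    and fs: "\<And>x. finite (succs E x)" and xB: "x \<notin> B"
  shows "reach_prob E val B x = (\<Sum>t\<in>succs E x. val x t * reach_prob E val B t)"
proof -
  have l: "(\<lambda>n. reach_within E val B (Suc n) x) \<longlonglongrightarrow> reach_prob E val B x"
    using rw_lim[OF gp out fs] by (rule LIMSEQ_Suc)
  have l2: "(\<lambda>n. (\<Sum>t\<in>succs E x. val x t * reach_within E val B n t)) \<longlonglongrightarrow> (\<Sum>t\<in>succs E x. val x t * reach_prob E val B t)"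
    by (intro tendsto_sum tendsto_mult_left rw_lim[OF gp out fs])
  have l3: "(\<lambda>n. reach_within E val B (Suc n) x) = (\<lambda>n. (\<Sum>t\<in>succs E x. val x t * reach_within E val B n t))"
    using xB by simp
  show ?thesis using LIMSEQ_unique[OF l] l2 l3 by simp
qed

lemma lower:
  assumes gp: "graph_preserving S E T val" and out: "\<And>x. x \<notin> S - T \<Longrightarrow> succs E x = {}"
    and fs: "\<And>x. finite (succs E x)"
    and fA: "\<And>x. x \<in> A \<Longrightarrow> f x = c"
    and fnn: "\<And>x. 0 \<le> f x"
    and ffix: "\<And>x. x \<in> S - T \<Longrightarrow> x \<notin> A \<Longrightarrow> f x = (\<Sum>t\<in>succs E x. val x t * f t)"
  shows "c * reach_within E val A n x \<le> f x"
proof (induction n arbitrary: x)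
  case 0 show ?case using fA fnn by simp
next
  case (Suc n)
  show ?case
  proof (cases "x \<in> A")
    case True thus ?thesis using fA by simp
  next
    case False
    show ?thesis
    proof (cases "x \<in> S - T")
      case True
      with gp have pos: "\<forall>t\<in>succs E x. 0 < val x t"
        unfolding graph_preserving_def by auto
      have "c * reach_within E val A (Suc n) x = (\<Sum>t\<in>succs E x. val x t * (c * reach_within E val A n t))"
        using False by (simp add: sum_distrib_left mult.left_commute)
      also have "\<dots> \<le> (\<Sum>t\<in>succs E x. val x t * f t)"
        using pos Suc.IH by (intro sum_mono) (simp add: less_imp_le mult_left_mono)
      finally show ?thesis using ffix[OF True False] by simp
    next
      case F2: False
      then show ?thesis using out[OF F2] False fnn by simp
    qed
  qed
qed

lemma sup_bound:
  fixes c y :: real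
  assumes "0 \<le> c" "\<And>n. c * g n \<le> y" "0 \<le> y" "(SUP n. g n) = 1"
  shows "c \<le> y"
proof (cases "c = 0")
  case True thus ?thesis using assms by simp
next
  case False
  then have cp: "c > 0" using assms by simp
  have "\<And>n. g n \<le> y / c" using assms(2) cp by (simp add: pos_le_divide_eq mult.commute)
  then have "(SUP n. g n) \<le> y / c" by (intro cSUP_least) auto
  then have "1 \<le> y / c" using assms by simp
  then show ?thesis using cp by (simp add: pos_le_divide_eq)
qed

theorem lemma14:
  fixes S :: "'a set" and E :: "('a \<times> 'a) set" and fin fail s :: 'a and A :: "'a set"
  assumes "tpmc S E fin fail"
    and "standing_assumptions S E fin fail"
    and "s \<in> S"
    and "is_equiv_class S E fin fail A"
    and "almost_surely_reaches S E fin fail s A"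
  shows "s \<in> A"
proof -
  let ?T = "{fin, fail}"
  have finS: "finite S" and Esub: "E \<subseteq> (S - ?T) \<times> S" using assms(1) unfolding tpmc_def by auto
  have out: "\<And>x. x \<notin> S - ?T \<Longrightarrow> succs E x = {}" using Esub unfolding succs_def by auto
  have fs: "\<And>x. finite (succs E x)"
  proof -
    fix x
    have "succs E x \<subseteq> S" using Esub unfolding succs_def by auto
    then show "finite (succs E x)" using finS finite_subset by blast
  qed
  obtain a0 where a0: "a0 \<in> S" "A = equiv_class S E fin fail a0"
    using assms(4) unfolding is_equiv_class_def by blast
  have "never_worse_equiv S E fin fail a0 s"
    unfolding never_worse_equiv_def
  proof (intro allI impI)
    fix val assume gp: "graph_preserving S E ?T val"
    let ?P = "P_val E val fin"
    let ?p = "?P a0"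
    have PA: "\<And>x. x \<in> A \<Longrightarrow> ?P x = ?p"
      using a0 gp unfolding equiv_class_def never_worse_equiv_def by auto
    have Pb: "\<And>x. 0 \<le> ?P x \<and> ?P x \<le> 1"
      unfolding P_val_def using rp_bounds[OF gp out fs] by blast
    have Pfix: "\<And>x. x \<in> S - ?T \<Longrightarrow> ?P x = (\<Sum>t\<in>succs E x. val x t * ?P t)"
      unfolding P_val_def by (rule rp_fix[OF gp out fs]) auto
    have R1: "(SUP n. reach_within E val A n s) = 1"
      using assms(5) gp unfolding almost_surely_reaches_def reach_prob_def by blast
    have l1: "\<And>n. ?p * reach_within E val A n s \<le> ?P s"
      by (rule lower[OF gp out fs]) (use PA Pb Pfix in auto)
    have "?p \<le> ?P s" by (rule sup_bound[OF _ l1 _ R1]) (use Pb in auto)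
    have l2: "\<And>n. (1 - ?p) * reach_within E val A n s \<le> 1 - ?P s"
    proof (rule lower[OF gp out fs])
      fix x assume "x \<in> A" thus "1 - ?P x = 1 - ?p" using PA by simp
    next
      fix x show "0 \<le> 1 - ?P x" using Pb by simp
    next
      fix x assume x: "x \<in> S - ?T" "x \<notin> A"
      with gp have s1: "(\<Sum>t\<in>succs E x. val x t) = 1"
        unfolding graph_preserving_def by auto
      have "1 - ?P x = (\<Sum>t\<in>succs E x. val x t) - (\<Sum>t\<in>succs E x. val x t * ?P t)"
        using Pfix[OF x(1)] s1 by simp
      also have "\<dots> = (\<Sum>t\<in>succs E x. val x t * (1 - ?P t))"
        by (simp add: sum_subtractf right_diff_distrib)
      finally show "1 - ?P x = (\<Sum>t\<in>succs E x. val x t * (1 - ?P t))" .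
    qed
    have "1 - ?p \<le> 1 - ?P s" by (rule sup_bound[OF _ l2 _ R1]) (use Pb[of a0] Pb[of s] in auto)
    with \<open>?p \<le> ?P s\<close> show "?p = ?P s" by simp
  qed
  then show ?thesis using a0 assms(3) unfolding equiv_class_def by simp
qed

end
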